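(* Let $N$ be a positive integer, $l\in\{2,\ldots,\frac{N}{2}\}$, and let $\Gamma$ be the $l$-hypercycle on $N$ vertices. Then the eigenvalues of its (signless) normalized Laplacian are $$\lambda_i=1+\frac{\sum_{r=1}^N m(r)\cos\left(\frac{2\pi i r}{N}\right)}{l},\qquad i=1,\ldots,N,$$ where $m:\{0,\ldots,N\}\to\mathbb{Z}$ is defined by $m(r):=l-r$ for $r\in\{1,\ldots,l-1\}$, $m(N-k):=l-k$ for $k\in\{1,\ldots,l-1\}$, and $m:=0$ otherwise.
   Context: A hypergraph $\Gamma=(\mathcal{V},\mathcal{H})$ has a finite vertex set $\mathcal{V}$ and a set $\mathcal{H}$ of nonempty subsets of $\mathcal{V}$ (hyperedges). $\deg(v)$ is the number of hyperedges containing $v$, $D$ the diagonal degree matrix, $A$ the matrix with $A_{ii}=0$ and $A_{ij}=-\#\{h\in\mathcal{H}: v_i,v_j\in h\}$ for $i\ne j$, and the (signless) normalized Laplacian is $L=\mathrm{Id}-D^{-1}A$. The $l$-hypercycle on $N$ vertices has $\mathcal{V}=\{v_1,\ldots,v_N\}$ and $\mathcal{H}=\{h_1,\ldots,h_N\}$ with $h_i=\{v_i,v_{i+1},\ldots,v_{i+l-1}\}$, indices taken modulo $N$ (i.e. $v_{N+i}:=v_i$). Here the eigenvalues $\lambda_i$ are indexed by the formula, not in increasing order. *)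

theory Defs
  imports Complex_Main "Jordan_Normal_Form.Char_Poly"
begin

(* A hypergraph on the vertex set {0..<n} (vertex v_k of the paper is k-1),
   given by its set of hyperedges H. *)

definition hdeg :: "nat set set \<Rightarrow> nat \<Rightarrow> nat" where
  "hdeg H v = card {h \<in> H. v \<in> h}"

definition hD :: "nat \<Rightarrow> nat set set \<Rightarrow> real mat" where
  "hD n H = mat n n (\<lambda>(i,j). if i = j then real (hdeg H i) else 0)"

definition hA :: "nat \<Rightarrow> nat set set \<Rightarrow> real mat" where
  "hA n H = mat n n (\<lambda>(i,j). if i = j then 0 else - real (card {h \<in> H. i \<in> h \<and> j \<in> h}))"

definition hDinv :: "nat \<Rightarrow> nat set set \<Rightarrow> real mat" where
  "hDinv n H = mat n n (\<lambda>(i,j). if i = j then 1 / real (hdeg H i) else 0)"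

definition hLap :: "nat \<Rightarrow> nat set set \<Rightarrow> real mat" where
  "hLap n H = 1\<^sub>m n - hDinv n H * hA n H"

definition hypercycle :: "nat \<Rightarrow> nat \<Rightarrow> nat set set" where
  "hypercycle N l = {{(i + j) mod N | j. j < l} | i. i < N}"

definition mfun :: "nat \<Rightarrow> nat \<Rightarrow> nat \<Rightarrow> int" where
  "mfun N l r = (if 1 \<le> r \<and> r \<le> l - 1 then int l - int r
     else if (\<exists>k. 1 \<le> k \<and> k \<le> l - 1 \<and> r = N - k) then int l - int (N - r)
     else 0)"

definition hc_eig :: "nat \<Rightarrow> nat \<Rightarrow> nat \<Rightarrow> real" where
  "hc_eig N l i = 1 + (\<Sum>r = 1..N. real_of_int (mfun N l r) * cos (2 * pi * real i * real r / real N)) / real l"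

end

theory Submission
  imports Defs
begin

definition win :: "nat \<Rightarrow> nat \<Rightarrow> nat \<Rightarrow> nat set" where
  "win N l i = {(i + j) mod N | j. j < l}"

lemma hc_image: "hypercycle N l = win N l ` {..<N}"
  by (auto simp: hypercycle_def win_def)

lemma win_mem:
  assumes "i < N" "x < N" "l < N"
  shows "x \<in> win N l i \<longleftrightarrow> (int x - int i) mod int N < int l"
proof
  assume "x \<in> win N l i"
  then obtain j where j: "j < l" "x = (i + j) mod N" by (auto simp: win_def)
  have "(int x - int i) mod int N = (int i + int j - int i) mod int N"
    using j by (simp add: zmod_int mod_diff_left_eq)
  also have "\<dots> = int j" using j assms by simp
  finally show "(int x - int i) mod int N < int l" using j by simp
next
  assume a: "(int x - int i) mod int N < int l"
  define j where "j = nat ((int x - int i) mod int N)"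
  have jj: "int j = (int x - int i) mod int N" using assms unfolding j_def by simp
  have "int ((i + j) mod N) = (int i + (int x - int i) mod int N) mod int N"
    by (simp add: zmod_int jj)
  also have "\<dots> = int x mod int N" by (simp add: mod_add_right_eq)
  also have "\<dots> = int x" using assms by simp
  finally have "(i + j) mod N = x" by simp
  moreover have "j < l" using a jj by simp
  ultimately show "x \<in> win N l i" unfolding win_def by blast
qed

lemma win_inj:
  assumes "0 < l" "l < N"
  shows "inj_on (win N l) {..<N}"
proof (rule inj_onI, rule ccontr)
  fix i i' assume i: "i \<in> {..<N}" and i': "i' \<in> {..<N}" and eq: "win N l i = win N l i'" and ne: "i \<noteq> i'"
  have "i \<in> win N l i" using win_mem[of i N i l] i assms by simp
  hence "i \<in> win N l i'" using eq by simp
  hence s: "(int i - int i') mod int N < int l" using win_mem[of i' N i l] i i' assms by simp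
  have s0: "(int i - int i') mod int N \<noteq> 0"
  proof
    assume "(int i - int i') mod int N = 0"
    hence "int N dvd (int i - int i')" by (simp add: mod_eq_0_iff_dvd)
    hence "int i mod int N = int i' mod int N" by (simp add: mod_eq_dvd_iff)
    moreover have "int i mod int N = int i" "int i' mod int N = int i'" using i i' by auto
    ultimately show False using ne by simp
  qed
  have s1: "(int i - int i') mod int N \<ge> 0" using assms by simp
  define y where "y = nat ((int i - 1) mod int N)"
  have yy: "int y = (int i - 1) mod int N" using assms unfolding y_def by simp
  have "(int i - 1) mod int N < int N" using assms by simp
  hence yN: "y < N" using yy by linarith
  have "(int y - int i) mod int N = (- 1) mod int N" by (simp add: yy mod_diff_left_eq)
  also have "\<dots> = int N - 1" using assms by (simp add: zmod_minus1)
  finally have "y \<notin> win N l i" using win_mem[of i N y l] i yN assms by simp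
  moreover have e1: "(int y - int i') mod int N = ((int i - int i') mod int N - 1) mod int N"
    by (simp add: yy mod_diff_left_eq algebra_simps)
  moreover have e2: "((int i - int i') mod int N - 1) mod int N = (int i - int i') mod int N - 1"
    apply (rule mod_pos_pos_trivial) using s0 s1 s assms by linarith+
  moreover have "y \<in> win N l i'" using win_mem[of i' N y l] i' yN assms e1 e2 s by simp
  ultimately show False using eq by simp
qed


lemma card_filter_image:
  assumes "inj_on f A"
  shows "card {h \<in> f ` A. P h} = card {i \<in> A. P (f i)}"
proof -
  have "{h \<in> f ` A. P h} = f ` {i \<in> A. P (f i)}" by auto
  moreover have "inj_on f {i \<in> A. P (f i)}" using assms by (rule inj_on_subset) auto
  ultimately show ?thesis by (simp add: card_image)
qed

lemma pair_count:
  assumes "0 < l" "l < N" "j < N" "t < N"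
  shows "card {h \<in> hypercycle N l. j \<in> h \<and> t \<in> h}
       = card {u. u < l \<and> (u + nat ((int t - int j) mod int N)) mod N < l}"
proof -
  let ?r = "nat ((int t - int j) mod int N)"
  have N0: "0 < N" using assms by simp
  have "card {h \<in> hypercycle N l. j \<in> h \<and> t \<in> h} = card {i \<in> {..<N}. j \<in> win N l i \<and> t \<in> win N l i}"
    unfolding hc_image by (rule card_filter_image[OF win_inj[OF assms(1,2)]])
  also have "{i \<in> {..<N}. j \<in> win N l i \<and> t \<in> win N l i}
     = {i \<in> {..<N}. (int j - int i) mod int N < int l \<and> (int t - int i) mod int N < int l}"
    using win_mem assms by auto
  also have "card \<dots> = card {u. u < l \<and> (u + ?r) mod N < l}"
  proof (rule bij_betw_same_card, rule bij_betw_byWitness[where f' = "\<lambda>u. nat ((int j - int u) mod int N)"])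
    show "\<forall>a\<in>{i \<in> {..<N}. (int j - int i) mod int N < int l \<and> (int t - int i) mod int N < int l}.
       nat ((int j - int (nat ((int j - int a) mod int N))) mod int N) = a"
    proof
      fix a assume a: "a \<in> {i \<in> {..<N}. (int j - int i) mod int N < int l \<and> (int t - int i) mod int N < int l}"
      have "(int j - int (nat ((int j - int a) mod int N))) mod int N = (int j - (int j - int a) mod int N) mod int N"
        using N0 by simp
      also have "\<dots> = int a mod int N" by (simp add: mod_simps)
      also have "\<dots> = int a" using a by simp
      finally show "nat ((int j - int (nat ((int j - int a) mod int N))) mod int N) = a" by simp
    qed
    show "\<forall>a\<in>{u. u < l \<and> (u + ?r) mod N < l}. nat ((int j - int (nat ((int j - int a) mod int N))) mod int N) = a"
    proof
      fix a assume a: "a \<in> {u. u < l \<and> (u + ?r) mod N < l}"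
      have "(int j - int (nat ((int j - int a) mod int N))) mod int N = (int j - (int j - int a) mod int N) mod int N"
        using N0 by simp
      also have "\<dots> = int a mod int N" by (simp add: mod_simps)
      also have "\<dots> = int a" using a assms by simp
      finally show "nat ((int j - int (nat ((int j - int a) mod int N))) mod int N) = a" by simp
    qed
    show "(\<lambda>u. nat ((int j - int u) mod int N)) ` {i \<in> {..<N}. (int j - int i) mod int N < int l \<and> (int t - int i) mod int N < int l}
       \<subseteq> {u. u < l \<and> (u + ?r) mod N < l}"
    proof safe
      fix a assume a: "a < N" "(int j - int a) mod int N < int l" "(int t - int a) mod int N < int l"
      show "nat ((int j - int a) mod int N) < l" using a N0 by (simp add: nat_less_iff)
      have "int ((nat ((int j - int a) mod int N) + ?r) mod N) = ((int j - int a) mod int N + (int t - int j) mod int N) mod int N"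
        using N0 by (simp add: zmod_int)
      also have "\<dots> = (int t - int a) mod int N" by (simp add: mod_simps)
      finally show "(nat ((int j - int a) mod int N) + ?r) mod N < l" using a by linarith
    qed
    show "(\<lambda>u. nat ((int j - int u) mod int N)) ` {u. u < l \<and> (u + ?r) mod N < l}
       \<subseteq> {i \<in> {..<N}. (int j - int i) mod int N < int l \<and> (int t - int i) mod int N < int l}"
    proof safe
      fix a assume a: "a < l" "(a + ?r) mod N < l"
      have "(int j - int a) mod int N < int N" using N0 by simp
      thus "nat ((int j - int a) mod int N) < N" using N0 by (simp add: nat_less_iff)
      have "(int j - int (nat ((int j - int a) mod int N))) mod int N = (int j - (int j - int a) mod int N) mod int N"
        using N0 by simp
      also have "\<dots> = int a mod int N" by (simp add: mod_simps)
      also have "\<dots> = int a" using a assms by simp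
      finally show "(int j - int (nat ((int j - int a) mod int N))) mod int N < int l" using a by simp
      have "(int t - int (nat ((int j - int a) mod int N))) mod int N = (int t - (int j - int a) mod int N) mod int N"
        using N0 by simp
      also have "\<dots> = (int a + (int t - int j) mod int N) mod int N" by (simp add: mod_simps algebra_simps)
      also have "\<dots> = int ((a + ?r) mod N)" using N0 by (simp add: zmod_int)
      finally show "(int t - int (nat ((int j - int a) mod int N))) mod int N < int l" using a by linarith
    qed
  qed
  finally show ?thesis .
qed


lemma mod_small2: "(x::nat) < 2 * N \<Longrightarrow> x mod N = (if x < N then x else x - N)"
  by (simp add: le_mod_geq)

lemma cnt_eval:
  assumes "2 \<le> l" "2 * l \<le> N" "r < N"
  shows "int (card {u. u < l \<and> (u + r) mod N < l}) = (if r = 0 then int l else mfun N l r)"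
proof -
  consider "r = 0" | "1 \<le> r \<and> r \<le> l - 1" | "l \<le> r \<and> r \<le> N - l" | "N - l < r" by linarith
  thus ?thesis
  proof cases
    case 1
    have "{u. u < l \<and> (u + r) mod N < l} = {..<l}" using 1 assms by auto
    thus ?thesis using 1 by simp
  next
    case 2
    have "{u. u < l \<and> (u + r) mod N < l} = {..<l-r}" using 2 assms by (auto simp: mod_small2)
    moreover have "mfun N l r = int l - int r" using 2 by (simp add: mfun_def)
    moreover have "r \<le> l" using 2 by linarith
    ultimately show ?thesis using 2 by (simp add: of_nat_diff)
  next
    case 3
    have "{u. u < l \<and> (u + r) mod N < l} = {}" using 3 assms by (auto simp: mod_small2)
    moreover have "mfun N l r = 0" using 3 assms by (auto simp: mfun_def)
    ultimately show ?thesis using 3 assms by simp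
  next
    case 4
    have "{u. u < l \<and> (u + r) mod N < l} = {N-r..<l}" using 4 assms by (auto simp: mod_small2 split: if_splits)
    moreover have "mfun N l r = int l - int (N - r)" proof -
      have ex: "\<exists>k. 1 \<le> k \<and> k \<le> l - 1 \<and> r = N - k"
        using 4 assms by (intro exI[of _ "N - r"]) linarith
      have nc: "\<not> (1 \<le> r \<and> r \<le> l - 1)" using 4 assms by linarith
      show ?thesis unfolding mfun_def if_not_P[OF nc] if_P[OF ex] ..
    qed
    ultimately show ?thesis using 4 assms by simp
  qed
qed


definition cc :: "nat \<Rightarrow> nat \<Rightarrow> nat \<Rightarrow> real" where
  "cc N l r = (if r = 0 then 1 else real_of_int (mfun N l r) / real l)"

lemma mod_zero_iff_eq:
  assumes "j < N" "t < N"
  shows "(int t - int j) mod int N = 0 \<longleftrightarrow> t = j"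
proof
  assume "(int t - int j) mod int N = 0"
  hence "int N dvd (int t - int j)" by (simp add: mod_eq_0_iff_dvd)
  hence "int t mod int N = int j mod int N" by (simp add: mod_eq_dvd_iff)
  moreover have "int t mod int N = int t" "int j mod int N = int j" using assms by auto
  ultimately show "t = j" by simp
qed simp

lemma r_nonzero:
  assumes "j < N" "t < N" "j \<noteq> t"
  shows "nat ((int t - int j) mod int N) \<noteq> 0"
proof -
  have "(int t - int j) mod int N \<noteq> 0" using mod_zero_iff_eq[OF assms(1,2)] assms(3) by simp
  moreover have "(int t - int j) mod int N \<ge> 0" using assms by simp
  ultimately show ?thesis by simp
qed

lemma lap_entry:
  assumes "2 \<le> l" "2 * l \<le> N" "j < N" "t < N"
  shows "hLap N (hypercycle N l) $$ (j,t) = cc N l (nat ((int t - int j) mod int N))"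
proof -
  let ?H = "hypercycle N l"
  let ?r = "nat ((int t - int j) mod int N)"
  have N0: "0 < N" using assms by simp
  have rN: "?r < N" using N0 by (simp add: nat_less_iff)
  have deg: "hdeg ?H k = l" if k: "k < N" for k
  proof -
    have "hdeg ?H k = card {h \<in> ?H. k \<in> h \<and> k \<in> h}" by (simp add: hdeg_def)
    also have "\<dots> = card {u. u < l \<and> (u + nat ((int k - int k) mod int N)) mod N < l}"
      using pair_count[of l N k k] assms k by simp
    also have "int \<dots> = int l" using cnt_eval[of l N 0] assms by simp
    finally show ?thesis by simp
  qed
  have cnt: "real (card {h \<in> ?H. j \<in> h \<and> t \<in> h}) = real_of_int (mfun N l ?r)" if ne: "j \<noteq> t"
  proof -
    have r0: "?r \<noteq> 0" using r_nonzero[OF assms(3,4) ne] .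
    have "int (card {h \<in> ?H. j \<in> h \<and> t \<in> h}) = int (card {u. u < l \<and> (u + ?r) mod N < l})"
      using pair_count[of l N j t] assms by simp
    also have "\<dots> = mfun N l ?r" using cnt_eval[OF assms(1,2) rN] r0 by simp
    finally have "real_of_int (int (card {h \<in> ?H. j \<in> h \<and> t \<in> h})) = real_of_int (mfun N l ?r)" by simp
    thus ?thesis by simp
  qed
  have cD: "hDinv N ?H \<in> carrier_mat N N" by (simp add: hDinv_def)
  have cA: "hA N ?H \<in> carrier_mat N N" by (simp add: hA_def)
  have "(hDinv N ?H * hA N ?H) $$ (j,t) = (\<Sum>k\<in>{0..<N}. hDinv N ?H $$ (j,k) * hA N ?H $$ (k,t))"
    using cD cA assms by (simp add: index_mult_mat scalar_prod_def)
  also have "\<dots> = (\<Sum>k\<in>{0..<N}. (if j = k then 1 / real (hdeg ?H j) * hA N ?H $$ (k,t) else 0))"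
    by (rule sum.cong) (use assms in \<open>auto simp: hDinv_def\<close>)
  also have "\<dots> = 1 / real l * hA N ?H $$ (j,t)"
    using assms deg by simp
  finally have P: "(hDinv N ?H * hA N ?H) $$ (j,t) = 1 / real l * hA N ?H $$ (j,t)" .
  have dims: "hDinv N ?H * hA N ?H \<in> carrier_mat N N" using cD cA by simp
  have Lent: "hLap N ?H $$ (j,t) = (if j = t then 1 else 0) - (hDinv N ?H * hA N ?H) $$ (j,t)"
    proof -
    have "dim_row (hDinv N ?H * hA N ?H) = N" "dim_col (hDinv N ?H * hA N ?H) = N" using dims by auto
    thus ?thesis unfolding hLap_def using assms by (simp add: index_minus_mat)
  qed
  have Aent: "hA N ?H $$ (j,t) = (if j = t then 0 else - real (card {h \<in> ?H. j \<in> h \<and> t \<in> h}))"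
    using assms by (simp add: hA_def)
  show ?thesis
  proof (cases "j = t")
    case True
    thus ?thesis using Lent P Aent by (simp add: cc_def)
  next
    case False
    have r0: "?r \<noteq> 0" using r_nonzero[OF assms(3,4) False] .
    show ?thesis using Lent P Aent False r0 cnt[OF False] by (simp add: cc_def)
  qed
qed


lemma pow_mod:
  fixes z :: complex
  assumes "z ^ N = 1"
  shows "z ^ (a mod N) = z ^ a"
proof -
  have e: "a = N * (a div N) + a mod N" by simp
  have "z ^ a = (z ^ N) ^ (a div N) * z ^ (a mod N)" by (subst e, simp only: power_add power_mult)
  thus ?thesis using assms by simp
qed

lemma circ_sum:
  fixes z :: complex and c :: "nat \<Rightarrow> complex"
  assumes "z ^ N = 1" "j < N"
  shows "(\<Sum>t<N. c (nat ((int t - int j) mod int N)) * z ^ t) = z ^ j * (\<Sum>r<N. c r * z ^ r)"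
proof -
  have N0: "0 < N" using assms by simp
  have "z ^ j * (\<Sum>r<N. c r * z ^ r) = (\<Sum>r<N. c r * z ^ (r + j))"
    by (simp add: sum_distrib_left power_add algebra_simps)
  also have "\<dots> = (\<Sum>t<N. c (nat ((int t - int j) mod int N)) * z ^ t)"
  proof (rule sum.reindex_bij_witness[where j = "\<lambda>r. (r + j) mod N" and i = "\<lambda>t. nat ((int t - int j) mod int N)"])
    fix a assume a: "a \<in> {..<N}"
    have "(int ((a + j) mod N) - int j) mod int N = (int a + int j - int j) mod int N"
      by (simp add: zmod_int mod_diff_left_eq)
    also have "\<dots> = int a" using a by simp
    finally show "nat ((int ((a + j) mod N) - int j) mod int N) = a" by simp
    show "(a + j) mod N \<in> {..<N}" using N0 by simp
    show "c (nat ((int ((a + j) mod N) - int j) mod int N)) * z ^ ((a + j) mod N) = c a * z ^ (a + j)"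
      using \<open>nat ((int ((a + j) mod N) - int j) mod int N) = a\<close> pow_mod[OF assms(1)] by simp
  next
    fix b assume b: "b \<in> {..<N}"
    show "nat ((int b - int j) mod int N) \<in> {..<N}" using N0 by (simp add: nat_less_iff)
    have "int ((nat ((int b - int j) mod int N) + j) mod N) = ((int b - int j) mod int N + int j) mod int N"
      using N0 by (simp add: zmod_int)
    also have "\<dots> = int b mod int N" by (simp add: mod_simps)
    also have "\<dots> = int b" using b by simp
    finally show "(nat ((int b - int j) mod int N) + j) mod N = b" by simp
  qed
  finally show ?thesis by simp
qed

lemma root_sum:
  fixes q :: complex
  assumes "q ^ N = 1" "q \<noteq> 1"
  shows "(\<Sum>k<N. q ^ (k + 1)) = 0"
proof -
  have "(\<Sum>k<N. q ^ (k + 1)) = q * (\<Sum>k<N. q ^ k)" by (simp add: sum_distrib_left)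
  also have "(\<Sum>k<N. q ^ k) = 0" using assms by (simp add: sum_gp_strict)
  finally show ?thesis by simp
qed

lemma cis_ne1:
  assumes "a < N" "b < N" "a \<noteq> b"
  shows "cis (2 * pi * (real a - real b) / real N) \<noteq> 1"
proof
  assume "cis (2 * pi * (real a - real b) / real N) = 1"
  hence "cos (2 * pi * (real a - real b) / real N) = 1" by (metis cis.sel(1) one_complex.sel(1))
  then obtain n :: int where n: "2 * pi * (real a - real b) / real N = real_of_int n * 2 * pi"
    by (auto simp: cos_one_2pi_int)
  have N0: "real N > 0" using assms by simp
  from n have "(2 * pi) * (real a - real b) = (2 * pi) * (real_of_int n * real N)" using N0
    by (simp add: field_simps)
  hence "real a - real b = real_of_int n * real N" using pi_gt_zero
    by (subst (asm) mult_left_cancel) auto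
  hence e: "int a - int b = n * int N"
    by (metis of_int_eq_iff of_int_mult of_int_of_nat_eq of_int_diff)
  show False
  proof (cases "n = 0")
    case True thus False using e assms by simp
  next
    case False
    hence "\<bar>n\<bar> \<ge> 1" by simp
    hence "\<bar>n\<bar> * int N \<ge> 1 * int N" by (intro mult_right_mono) auto
    hence "\<bar>n * int N\<bar> \<ge> int N" by (simp add: abs_mult)
    moreover have "\<bar>int a - int b\<bar> < int N" using assms by simp
    ultimately show False using e by simp
  qed
qed


lemma mfun_val:
  assumes "2 \<le> l" "2 * l \<le> N" "0 < r" "r < N"
  shows "mfun N l r = (if r \<le> l - 1 then int l - int r else if N - l < r then int l - int (N - r) else 0)"
proof -
  consider "1 \<le> r \<and> r \<le> l - 1" | "l \<le> r \<and> r \<le> N - l" | "N - l < r" using assms by linarith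
  thus ?thesis
  proof cases
    case 1 thus ?thesis by (simp add: mfun_def)
  next
    case 3
    have ex: "\<exists>k. 1 \<le> k \<and> k \<le> l - 1 \<and> r = N - k"
      using 3 assms by (intro exI[of _ "N - r"]) linarith
    have nc: "\<not> (1 \<le> r \<and> r \<le> l - 1)" using 3 assms by linarith
    have "mfun N l r = int l - int (N - r)" unfolding mfun_def if_not_P[OF nc] if_P[OF ex] ..
    thus ?thesis using 3 nc by auto
  next
    case 2 thus ?thesis using assms by (auto simp: mfun_def)
  qed
qed

lemma mfun_sym:
  assumes "2 \<le> l" "2 * l \<le> N" "0 < r" "r < N"
  shows "mfun N l (N - r) = mfun N l r"
  using mfun_val[OF assms] mfun_val[OF assms(1,2), of "N - r"] assms by auto

lemma mfun_0: assumes "2 \<le> l" "2 * l \<le> N" shows "mfun N l 0 = 0"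
  using assms by (auto simp: mfun_def)

lemma mfun_N: assumes "2 \<le> l" "2 * l \<le> N" shows "mfun N l N = 0"
  using assms by (auto simp: mfun_def)

lemma sin_sum:
  assumes "2 \<le> l" "2 * l \<le> N"
  shows "(\<Sum>r\<in>{1..<N}. real_of_int (mfun N l r) * sin (2 * pi * real p * real r / real N)) = 0"
proof -
  let ?f = "\<lambda>r. real_of_int (mfun N l r) * sin (2 * pi * real p * real r / real N)"
  have N0: "real N > 0" using assms by simp
  have "(\<Sum>r\<in>{1..<N}. ?f r) = (\<Sum>r\<in>{1..<N}. ?f (N - r))"
    by (rule sum.reindex_bij_witness[where i = "\<lambda>r. N - r" and j = "\<lambda>r. N - r"]) auto
  also have "\<dots> = (\<Sum>r\<in>{1..<N}. - ?f r)"
  proof (rule sum.cong[OF refl])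
    fix r assume r: "r \<in> {1..<N}"
    have "2 * pi * real p * real (N - r) / real N = 2 * real p * pi - 2 * pi * real p * real r / real N"
      using r N0 by (simp add: of_nat_diff field_simps)
    hence "sin (2 * pi * real p * real (N - r) / real N) = - sin (2 * pi * real p * real r / real N)"
      by (simp add: sin_diff)
    thus "?f (N - r) = - ?f r" using mfun_sym[OF assms, of r] r by simp
  qed
  also have "\<dots> = - (\<Sum>r\<in>{1..<N}. ?f r)" by (simp add: sum_negf)
  finally show ?thesis by simp
qed

lemma eig:
  assumes "2 \<le> l" "2 * l \<le> N"
  shows "(\<Sum>r<N. complex_of_real (cc N l r) * cis (2 * pi * real p / real N) ^ r) = complex_of_real (hc_eig N l p)"
proof -
  have N0: "0 < N" using assms by simp
  have pw: "cis (2 * pi * real p / real N) ^ r = cis (2 * pi * real p * real r / real N)" for r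
    by (simp add: DeMoivre algebra_simps)
  have split0: "(\<Sum>r<N. g r) = g 0 + (\<Sum>r\<in>{1..<N}. g r)" for g :: "nat \<Rightarrow> real"
    using N0 by (simp add: lessThan_atLeast0 sum.atLeast_Suc_lessThan)
  have cc1: "r \<in> {1..<N} \<Longrightarrow> cc N l r = real_of_int (mfun N l r) / real l" for r by (simp add: cc_def)
  have splitN: "(\<Sum>r=1..N. g r) = (\<Sum>r\<in>{1..<N}. g r) + g N" for g :: "nat \<Rightarrow> real"
  proof -
    have "{1..N} = insert N {1..<N}" using N0 by auto
    thus ?thesis by simp
  qed
  have "Re (\<Sum>r<N. complex_of_real (cc N l r) * cis (2 * pi * real p / real N) ^ r)
      = (\<Sum>r<N. cc N l r * cos (2 * pi * real p * real r / real N))"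
    by (simp add: Re_sum pw)
  also have "\<dots> = 1 + (\<Sum>r\<in>{1..<N}. real_of_int (mfun N l r) / real l * cos (2 * pi * real p * real r / real N))"
    by (subst split0) (simp add: cc_def cc1)
  also have "\<dots> = hc_eig N l p"
    unfolding hc_eig_def splitN using mfun_N[OF assms] by (simp add: sum_divide_distrib)
  finally have re: "Re (\<Sum>r<N. complex_of_real (cc N l r) * cis (2 * pi * real p / real N) ^ r) = hc_eig N l p" .
  have "Im (\<Sum>r<N. complex_of_real (cc N l r) * cis (2 * pi * real p / real N) ^ r)
      = (\<Sum>r<N. cc N l r * sin (2 * pi * real p * real r / real N))"
    by (simp add: Im_sum pw)
  also have "\<dots> = (\<Sum>r\<in>{1..<N}. real_of_int (mfun N l r) * sin (2 * pi * real p * real r / real N)) / real l"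
    by (subst split0) (simp add: cc_def cc1 sum_divide_distrib)
  also have "\<dots> = 0" using sin_sum[OF assms] by simp
  finally have im: "Im (\<Sum>r<N. complex_of_real (cc N l r) * cis (2 * pi * real p / real N) ^ r) = 0" .
  show ?thesis using re im by (simp add: complex_eq_iff)
qed


interpretation of_real_poly_hom: map_poly_inj_comm_ring_hom "of_real :: real \<Rightarrow> complex" ..

definition zz :: "nat \<Rightarrow> nat \<Rightarrow> complex" where
  "zz N k = cis (2 * pi * real (k + 1) / real N)"

lemma zz_pow_N: "0 < N \<Longrightarrow> zz N k ^ N = 1"
proof -
  assume N0: "0 < N"
  have "zz N k ^ N = cis (2 * pi * real (k + 1))" unfolding zz_def DeMoivre using N0 by simp
  also have "\<dots> = 1" by (rule cis_multiple_2pi) (simp del: of_nat_Suc)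
  finally show ?thesis .
qed

lemma FG_entry:
  assumes "a < N" "b < N"
  shows "(\<Sum>k<N. zz N k ^ a * (cnj (zz N k) ^ b / of_nat N)) = (if a = b then 1 else 0)"
proof -
  let ?q = "cis (2 * pi * (real a - real b) / real N)"
  have N0: "0 < N" using assms by simp
  have t: "zz N k ^ a * (cnj (zz N k) ^ b / of_nat N) = ?q ^ (k + 1) / of_nat N" for k
  proof -
    have "zz N k ^ a * cnj (zz N k) ^ b = cis (real a * (2 * pi * real (k + 1) / real N) + real b * (- (2 * pi * real (k + 1) / real N)))"
      unfolding zz_def cis_cnj DeMoivre cis_mult ..
    also have "\<dots> = cis (real (k + 1) * (2 * pi * (real a - real b) / real N))"
      by (rule arg_cong[where f = cis]) (use N0 in \<open>simp add: field_simps\<close>)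
    also have "\<dots> = ?q ^ (k + 1)" unfolding DeMoivre ..
    finally show ?thesis by simp
  qed
  have "(\<Sum>k<N. zz N k ^ a * (cnj (zz N k) ^ b / of_nat N)) = (\<Sum>k<N. ?q ^ (k + 1)) / of_nat N"
    unfolding t by (simp add: sum_divide_distrib)
  also have "\<dots> = (if a = b then 1 else 0)"
  proof (cases "a = b")
    case True thus ?thesis using N0 by simp
  next
    case False
    have "?q ^ N = cis (2 * pi * (real a - real b))" unfolding DeMoivre using N0 by simp
    also have "\<dots> = 1" by (rule cis_multiple_2pi) simp
    finally have "(\<Sum>k<N. ?q ^ (k + 1)) = 0" using root_sum cis_ne1[OF assms False] by blast
    thus ?thesis using False by simp
  qed
  finally show ?thesis .
qed


theorem mainTheorem10:
  fixes N l :: nat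
  assumes "0 < N" and "2 \<le> l" and "2 * l \<le> N"
  shows "char_poly (hLap N (hypercycle N l)) = (\<Prod>i = 1..N. [:- hc_eig N l i, 1:])"
proof -
  note a = assms(2,3)
  have N0: "0 < N" using assms by simp
  define L where "L = hLap N (hypercycle N l)"
  define M where "M = map_mat complex_of_real L"
  define F where "F = mat N N (\<lambda>(j,k). zz N k ^ j)"
  define G where "G = mat N N (\<lambda>(k,j). cnj (zz N k) ^ j / of_nat N)"
  define \<mu> where "\<mu> k = complex_of_real (hc_eig N l (k + 1))" for k
  define D where "D = mat N N (\<lambda>(j,k). if j = k then \<mu> k else 0)"
  have cL: "L \<in> carrier_mat N N" unfolding L_def hLap_def
    by (intro minus_carrier_mat mult_carrier_mat[of _ N N]) (simp_all add: hDinv_def hA_def)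
  have cM: "M \<in> carrier_mat N N" using cL by (simp add: M_def)
  have cF: "F \<in> carrier_mat N N" by (simp add: F_def)
  have cG: "G \<in> carrier_mat N N" by (simp add: G_def)
  have cD: "D \<in> carrier_mat N N" by (simp add: D_def)
  have FG: "F * G = 1\<^sub>m N"
  proof (rule eq_matI)
    fix i j assume ij: "i < dim_row (1\<^sub>m N :: complex mat)" "j < dim_col (1\<^sub>m N :: complex mat)"
    have "(F * G) $$ (i,j) = (\<Sum>k\<in>{0..<N}. F $$ (i,k) * G $$ (k,j))"
      using cF cG ij by (simp add: index_mult_mat scalar_prod_def)
    also have "\<dots> = (\<Sum>k<N. zz N k ^ i * (cnj (zz N k) ^ j / of_nat N))"
      using ij by (simp add: F_def G_def lessThan_atLeast0)
    also have "\<dots> = 1\<^sub>m N $$ (i,j)" using FG_entry[of i N j] ij by simp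
    finally show "(F * G) $$ (i,j) = 1\<^sub>m N $$ (i,j)" .
  qed (use cF cG in auto)
  have GF: "G * F = 1\<^sub>m N" by (rule mat_mult_left_right_inverse[OF cF cG FG])
  have MF: "M * F = F * D"
  proof (rule eq_matI)
    fix j k assume jk: "j < dim_row (F * D)" "k < dim_col (F * D)"
    hence j: "j < N" and k: "k < N" using cF cD by auto
    have "(M * F) $$ (j,k) = (\<Sum>t\<in>{0..<N}. M $$ (j,t) * F $$ (t,k))"
      using cM cF j k by (simp add: index_mult_mat scalar_prod_def)
    also have "\<dots> = (\<Sum>t<N. complex_of_real (cc N l (nat ((int t - int j) mod int N))) * zz N k ^ t)"
      using j k cL by (simp add: M_def F_def lessThan_atLeast0 lap_entry[OF a] L_def)
    also have "\<dots> = zz N k ^ j * (\<Sum>r<N. complex_of_real (cc N l r) * zz N k ^ r)"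
      by (rule circ_sum[OF zz_pow_N[OF N0] j])
    also have "(\<Sum>r<N. complex_of_real (cc N l r) * zz N k ^ r) = \<mu> k"
      unfolding zz_def \<mu>_def by (rule eig[OF a])
    also have "zz N k ^ j * \<mu> k = (F * D) $$ (j,k)"
    proof -
      have "(F * D) $$ (j,k) = (\<Sum>t\<in>{0..<N}. F $$ (j,t) * D $$ (t,k))"
        using cF cD j k by (simp add: index_mult_mat scalar_prod_def)
      also have "\<dots> = (\<Sum>t\<in>{0..<N}. if t = k then zz N k ^ j * \<mu> k else 0)"
        by (rule sum.cong) (use j k in \<open>auto simp: F_def D_def\<close>)
      also have "\<dots> = zz N k ^ j * \<mu> k" using k by simp
      finally show ?thesis by simp
    qed
    finally show "(M * F) $$ (j,k) = (F * D) $$ (j,k)" .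
  qed (use cM cF cD in auto)
  have MFDG: "M = F * D * G"
  proof -
    have "M = M * 1\<^sub>m N" using cM by simp
    also have "\<dots> = M * (F * G)" using FG by simp
    also have "\<dots> = (M * F) * G" using cM cF cG by (simp add: assoc_mult_mat)
    also have "\<dots> = F * D * G" using MF by simp
    finally show ?thesis .
  qed
  have sim: "similar_mat M D"
    unfolding similar_mat_def similar_mat_wit_def
    using cM cD cF cG FG GF MFDG by (intro exI[of _ F] exI[of _ G]) (auto simp: Let_def)
  have ut: "upper_triangular D" by (simp add: upper_triangular_def D_def)
  have "char_poly M = char_poly D" by (rule char_poly_similar[OF sim])
  also have "\<dots> = (\<Prod>a\<leftarrow>diag_mat D. [:- a, 1:])" by (rule char_poly_upper_triangular[OF cD ut])
  also have "diag_mat D = map \<mu> [0..<N]" by (simp add: diag_mat_def D_def)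
  also have "(\<Prod>a\<leftarrow>map \<mu> [0..<N]. [:- a, 1:]) = (\<Prod>k\<in>{0..<N}. [:- \<mu> k, 1:])"
  proof -
    have "(\<Prod>a\<leftarrow>map \<mu> [0..<N]. [:- a, 1:]) = (\<Prod>k\<leftarrow>[0..<N]. [:- \<mu> k, 1:])" by (simp add: o_def)
    also have "\<dots> = (\<Prod>k\<in>{0..<N}. [:- \<mu> k, 1:])"
      using prod.distinct_set_conv_list[of "[0..<N]" "\<lambda>k. [:- \<mu> k, 1:]"] by simp
    finally show ?thesis .
  qed
  also have "\<dots> = (\<Prod>i\<in>{1..N}. [:- complex_of_real (hc_eig N l i), 1:])"
    unfolding \<mu>_def
    by (rule prod.reindex_bij_witness[where i = "\<lambda>i. i - 1" and j = "\<lambda>k. k + 1"]) auto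
  also have "\<dots> = map_poly complex_of_real (\<Prod>i = 1..N. [:- hc_eig N l i, 1:])"
    by (simp add: of_real_poly_hom.hom_prod)
  finally have 1: "char_poly M = map_poly complex_of_real (\<Prod>i = 1..N. [:- hc_eig N l i, 1:])" .
  have 2: "char_poly M = map_poly complex_of_real (char_poly L)"
    unfolding M_def by (rule of_real_hom.char_poly_hom[OF cL])
  from 1 2 show ?thesis unfolding L_def by (simp add: of_real_poly_hom.eq_iff)
qed

end
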